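(* The formal power series $L$ and $R$ satisfy $L(z,x)=x^{-1}\bigl(L(z,x)-xL_1(z)\bigr)+R(z,x)$ and $R(z,x)=z\,R(z,x)\,L(z,x)+x$, where $L_1(z)$ is the coefficient of $x^1$ in $L(z,x)$.
   Context: Formulas are built from atoms by a binary product: every formula is an atom or $A\bullet B$. A context is a finite (possibly empty) list of formulas; commas denote concatenation; its length is its number of formulas. Size: $|p|=0$, $|A\bullet B|=1+|A|+|B|$. Frontier: $\mathrm{fr}(p)=p$, $\mathrm{fr}(A\bullet B)=\mathrm{fr}(A),\mathrm{fr}(B)$. A context is irreducible if its leftmost formula is not a product (it is empty or begins with an atom). A focused derivation is a finite derivation tree with no undischarged premises using only: ($\bullet L$) from $A,B,\Delta\vdash C$ infer $A\bullet B,\Delta\vdash C$; ($\bullet R^{foc}$) from $\Gamma\vdash A$ and $\Delta\vdash B$ infer $\Gamma,\Delta\vdash A\bullet B$ with $\Gamma$ irreducible; ($id^{atm}$) $p\vdash p$ for atoms $p$. For each $n$ fix the frontier $p_0,\dots,p_n$ of distinct atoms. Let $\ell_{n,k}$ (resp. $r_{n,k}$) be the number of focused derivations of sequents $\Gamma\vdash B$ with $|B|=n$, $\mathrm{fr}(B)=p_0,\dots,p_n$, and $\Gamma$ a context (resp. an irreducible context) of length $k$. $L(z,x)=\sum_{n,k}\ell_{n,k}z^nx^k$ and $R(z,x)=\sum_{n,k}r_{n,k}z^nx^k$. *)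

theory Defs
  imports Main "HOL-Computational_Algebra.Formal_Power_Series" "HOL-Computational_Algebra.Formal_Laurent_Series"
begin

(* Formulas: atoms (atoms are natural numbers; p_i is Atom i) or binary products A \<bullet> B *)
datatype form = Atom nat | Prod form form

fun fsize :: "form \<Rightarrow> nat" where
  "fsize (Atom p) = 0"
| "fsize (Prod A B) = 1 + fsize A + fsize B"

fun fr :: "form \<Rightarrow> nat list" where
  "fr (Atom p) = [p]"
| "fr (Prod A B) = fr A @ fr B"

fun irreducible :: "form list \<Rightarrow> bool" where
  "irreducible [] = True"
| "irreducible (Atom p # \<Gamma>) = True"
| "irreducible (Prod A B # \<Gamma>) = False"

datatype deriv =
    IdD nat                                       (* p |- p *)
  | LD form form "form list" form deriv           (* from A,B,Delta |- C infer A.B,Delta |- C *)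
  | RD "form list" "form list" form form deriv deriv
                                                  (* from Gamma |- A, Delta |- B infer Gamma,Delta |- A.B *)

fun concl :: "deriv \<Rightarrow> form list \<times> form" where
  "concl (IdD p) = ([Atom p], Atom p)"
| "concl (LD A B \<Delta> C d) = (Prod A B # \<Delta>, C)"
| "concl (RD \<Gamma> \<Delta> A B d1 d2) = (\<Gamma> @ \<Delta>, Prod A B)"

fun focused :: "deriv \<Rightarrow> bool" where
  "focused (IdD p) = True"
| "focused (LD A B \<Delta> C d) = (focused d \<and> concl d = (A # B # \<Delta>, C))"
| "focused (RD \<Gamma> \<Delta> A B d1 d2) =
     (focused d1 \<and> focused d2 \<and> concl d1 = (\<Gamma>, A) \<and> concl d2 = (\<Delta>, B) \<and> irreducible \<Gamma>)"

definition ell :: "nat \<Rightarrow> nat \<Rightarrow> nat" where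
  "ell n k = card {d. focused d \<and> fsize (snd (concl d)) = n \<and> fr (snd (concl d)) = [0..<Suc n]
                     \<and> length (fst (concl d)) = k}"

definition rr :: "nat \<Rightarrow> nat \<Rightarrow> nat" where
  "rr n k = card {d. focused d \<and> fsize (snd (concl d)) = n \<and> fr (snd (concl d)) = [0..<Suc n]
                     \<and> length (fst (concl d)) = k \<and> irreducible (fst (concl d))}"

(* Bivariate generating functions as power series in x whose coefficients are
   power series in z:  L = sum_k (sum_n ell n k z^n) x^k. *)
definition Lgf :: "int fps fps" where
  "Lgf = Abs_fps (\<lambda>k. Abs_fps (\<lambda>n. int (ell n k)))"

definition Rgf :: "int fps fps" where
  "Rgf = Abs_fps (\<lambda>k. Abs_fps (\<lambda>n. int (rr n k)))"

(* the variables: x is the outer indeterminate, z the inner one *)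
abbreviation xvar :: "int fps fps" where "xvar \<equiv> fps_X"
abbreviation zvar :: "int fps fps" where "zvar \<equiv> fps_const fps_X"

end

theory Submission
  imports Defs
begin


abbreviation goal where "goal d \<equiv> snd (concl d)"
abbreviation ctx where "ctx d \<equiv> fst (concl d)"

lemma fr_len: "length (fr C) = Suc (fsize C)"
  by (induction C) auto

lemma fr_ne: "fr C \<noteq> []"
  using fr_len[of C] by auto

lemma focused_fr: "focused d \<Longrightarrow> concat (map fr (ctx d)) = fr (goal d)"
  by (induction d) auto

lemma focused_ne: "focused d \<Longrightarrow> ctx d \<noteq> []"
  by (induction d) auto

lemma len_concat_fr: "length Gs \<le> length (concat (map fr Gs))"
proof (induction Gs)
  case (Cons a Gs) then show ?case using fr_ne[of a] by (cases "fr a") auto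
qed simp

lemma focused_len: "focused d \<Longrightarrow> length (ctx d) \<le> length (fr (goal d))"
  using focused_fr len_concat_fr by metis

lemma irr_app: "xs \<noteq> [] \<Longrightarrow> irreducible xs \<Longrightarrow> irreducible (xs @ ys)"
  by (cases xs rule: irreducible.cases) auto

definition SS :: "nat list \<Rightarrow> nat \<Rightarrow> deriv set" where
  "SS xs k = {d. focused d \<and> fr (goal d) = xs \<and> length (ctx d) = k}"
definition TT :: "nat list \<Rightarrow> nat \<Rightarrow> deriv set" where
  "TT xs k = {d. focused d \<and> fr (goal d) = xs \<and> length (ctx d) = k \<and> irreducible (ctx d)}"

fun lft :: "deriv \<Rightarrow> deriv" where
  "lft d = (case concl d of (A # B # D, C) \<Rightarrow> LD A B D C d | _ \<Rightarrow> d)"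

fun mkR :: "deriv \<times> deriv \<Rightarrow> deriv" where
  "mkR (d1, d2) = RD (ctx d1) (ctx d2) (goal d1) (goal d2) d1 d2"

lemma SS0: "SS xs 0 = {}"
  using focused_ne by (auto simp: SS_def)

lemma SS_big: "length xs < k \<Longrightarrow> SS xs k = {}"
  using focused_len by (fastforce simp: SS_def)

lemma TT_sub: "TT xs k \<subseteq> SS xs k" by (auto simp: SS_def TT_def)

lemma SS_dec: assumes "k \<ge> 1" shows "SS xs k = TT xs k \<union> lft ` SS xs (Suc k)"
proof
  show "SS xs k \<subseteq> TT xs k \<union> lft ` SS xs (Suc k)"
  proof
    fix d assume d: "d \<in> SS xs k"
    show "d \<in> TT xs k \<union> lft ` SS xs (Suc k)"
    proof (cases "irreducible (ctx d)")
      case True then show ?thesis using d by (auto simp: SS_def TT_def)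
    next
      case False
      then obtain A B D C d' where dd: "d = LD A B D C d'"
        using d focused_ne irr_app by (cases d) (auto simp: SS_def, metis focused_ne fst_conv)
      then have "d' \<in> SS xs (Suc k)" "lft d' = d" using d by (auto simp: SS_def)
      then show ?thesis by blast
    qed
  qed
next
  show "TT xs k \<union> lft ` SS xs (Suc k) \<subseteq> SS xs k"
  proof -
    have "lft d \<in> SS xs k" if "d \<in> SS xs (Suc k)" for d
    proof -
      obtain G C where c: "concl d = (G, C)" by (cases "concl d")
      with that assms obtain A B D where "G = A # B # D"
        by (cases G; cases "tl G") (auto simp: SS_def)
      then show ?thesis using that c by (auto simp: SS_def)
    qed
    then show ?thesis using TT_sub by blast
  qed
qed

lemma lft_inj: "k \<ge> 1 \<Longrightarrow> inj_on lft (SS xs (Suc k))"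
proof (rule inj_onI)
  assume k: "k \<ge> 1"
  fix x y assume "x \<in> SS xs (Suc k)" "y \<in> SS xs (Suc k)" "lft x = lft y"
  moreover have "\<exists>A B D C. lft z = LD A B D C z" if "z \<in> SS xs (Suc k)" for z
  proof -
    obtain G C where c: "concl z = (G, C)" by (cases "concl z")
    with that k obtain A B D where "G = A # B # D"
      using focused_ne[of z] by (cases G; cases "tl G") (auto simp: SS_def)
    then show ?thesis using c by auto
  qed
  ultimately show "x = y" by (metis deriv.inject(2))
qed

lemma SS_disj: "k \<ge> 1 \<Longrightarrow> TT xs k \<inter> lft ` SS xs (Suc k) = {}"
proof -
  assume k: "k \<ge> 1"
  have "\<not> irreducible (ctx (lft z))" if "z \<in> SS xs (Suc k)" for z
  proof -
    obtain G C where c: "concl z = (G, C)" by (cases "concl z")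
    with that k obtain A B D where "G = A # B # D"
      using focused_ne[of z] by (cases G; cases "tl G") (auto simp: SS_def)
    then show ?thesis using c by auto
  qed
  then show ?thesis by (auto simp: TT_def)
qed

definition PP :: "nat list \<Rightarrow> nat \<Rightarrow> (deriv \<times> deriv) set" where
  "PP xs k = (\<Union>i\<in>{1..<length xs}. \<Union>k1\<in>{..k}. TT (take i xs) k1 \<times> SS (drop i xs) (k-k1))"

lemma TT_dec: "TT xs k = (if length xs = 1 \<and> k = 1 then {IdD (hd xs)} else {}) \<union> mkR ` PP xs k"
proof
  show "TT xs k \<subseteq> (if length xs = 1 \<and> k = 1 then {IdD (hd xs)} else {}) \<union> mkR ` PP xs k"
  proof
    fix d assume d: "d \<in> TT xs k"
    show "d \<in> (if length xs = 1 \<and> k = 1 then {IdD (hd xs)} else {}) \<union> mkR ` PP xs k"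
    proof (cases d)
      case (IdD p) then show ?thesis using d by (auto simp: TT_def)
    next
      case (LD A B D C d') then show ?thesis using d by (auto simp: TT_def)
    next
      case (RD G D A B d1 d2)
      have f: "focused d1" "focused d2" "concl d1 = (G, A)" "concl d2 = (D, B)" "irreducible G"
        and xs: "xs = fr A @ fr B" and k: "k = length G + length D"
        using d RD by (auto simp: TT_def)
      define i where "i = length (fr A)"
      have i: "i \<in> {1..<length xs}" using fr_len[of A] fr_len[of B] xs i_def by simp
      have "d1 \<in> TT (take i xs) (length G)" using f xs i_def by (auto simp: TT_def)
      moreover have "d2 \<in> SS (drop i xs) (k - length G)" using f xs i_def k by (auto simp: SS_def)
      ultimately have "(d1, d2) \<in> PP xs k" unfolding PP_def using i k
        by (intro UN_I[OF i] UN_I[of "length G"]) auto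
      moreover have "d = mkR (d1, d2)" using RD f by simp
      ultimately show ?thesis by (intro UnI2 image_eqI)
    qed
  qed
next
  have "mkR p \<in> TT xs k" if pP: "p \<in> PP xs k" for p
  proof -
    obtain i k1 where i: "i \<in> {1..<length xs}" and k1: "k1 \<le> k"
      and pp: "p \<in> TT (take i xs) k1 \<times> SS (drop i xs) (k - k1)"
      using pP unfolding PP_def by auto
    obtain d1 d2 where p: "p = (d1, d2)" by (cases p)
    have d1: "d1 \<in> TT (take i xs) k1" and d2: "d2 \<in> SS (drop i xs) (k - k1)" using pp p by auto
    have "irreducible (ctx d1 @ ctx d2)" using d1 focused_ne[of d1] irr_app by (auto simp: TT_def)
    then show ?thesis using p k1 d1 d2 by (auto simp: TT_def SS_def)
  qed
  moreover have "IdD (hd xs) \<in> TT xs 1" if "length xs = 1"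
    using that by (cases xs) (auto simp: TT_def)
  ultimately show "(if length xs = 1 \<and> k = 1 then {IdD (hd xs)} else {}) \<union> mkR ` PP xs k \<subseteq> TT xs k"
    by auto
qed

lemma mkR_inj: "inj mkR"
  by (rule injI) auto

lemma PP_fin: assumes "\<And>ys j. length ys < length xs \<Longrightarrow> finite (SS ys j)"
  shows "finite (PP xs k)"
proof -
  have "finite (TT (take i xs) k1 \<times> SS (drop i xs) (k - k1))" if i: "i \<in> {1..<length xs}" for i k1
  proof -
    have "length (take i xs) < length xs" "length (drop i xs) < length xs"
      using i by auto
    then have "finite (TT (take i xs) k1)" "finite (SS (drop i xs) (k - k1))"
      using assms TT_sub finite_subset by metis+
    then show ?thesis by simp
  qed
  then show ?thesis unfolding PP_def by blast
qed

lemma SS_fin: "finite (SS xs k)"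
proof (induction xs arbitrary: k rule: length_induct)
  case (1 xs)
  have TTf: "finite (TT xs j)" for j
    using TT_dec[of xs j] PP_fin[of xs j] 1 by auto
  show ?case
  proof (cases "k \<le> length xs + 1")
    case True
    then show ?thesis
    proof (induction k rule: inc_induct)
      case base then show ?case using SS_big by simp
    next
      case (step i)
      show ?case
      proof (cases "i = 0")
        case True then show ?thesis using SS0 by simp
      next
        case False then show ?thesis using SS_dec[of i xs] TTf step by simp
      qed
    qed
  next
    case False then show ?thesis using SS_big by simp
  qed
qed


lemma card_SS: "k \<ge> 1 \<Longrightarrow> card (SS xs k) = card (TT xs k) + card (SS xs (Suc k))"
proof -
  assume k: "k \<ge> 1"
  have "card (SS xs k) = card (TT xs k) + card (lft ` SS xs (Suc k))"
    unfolding SS_dec[OF k]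
    by (rule card_Un_disjoint[OF finite_subset[OF TT_sub SS_fin] finite_imageI[OF SS_fin] SS_disj[OF k]])
  also have "card (lft ` SS xs (Suc k)) = card (SS xs (Suc k))"
    by (rule card_image[OF lft_inj[OF k]])
  finally show ?thesis .
qed

lemma TT_fin: "finite (TT xs k)" using finite_subset[OF TT_sub SS_fin] .

lemma TT_disj: "(ys, k1) \<noteq> (zs, k2) \<Longrightarrow> TT ys k1 \<inter> TT zs k2 = {}"
  unfolding TT_def by auto

lemma prod_disj: "A \<inter> B = {} \<Longrightarrow> (A \<times> C) \<inter> (B \<times> D) = {}" by blast

lemma card_PP: "card (PP xs k) = (\<Sum>i=1..<length xs. \<Sum>k1\<le>k. card (TT (take i xs) k1) * card (SS (drop i xs) (k-k1)))"
proof -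
  have inner: "card (\<Union>k1\<in>{..k}. TT (take i xs) k1 \<times> SS (drop i xs) (k-k1))
     = (\<Sum>k1\<le>k. card (TT (take i xs) k1) * card (SS (drop i xs) (k-k1)))" for i
  proof (subst card_UN_disjoint)
    show "\<forall>a\<in>{..k}. \<forall>b\<in>{..k}. a \<noteq> b \<longrightarrow> (TT (take i xs) a \<times> SS (drop i xs) (k-a)) \<inter> (TT (take i xs) b \<times> SS (drop i xs) (k-b)) = {}"
      by (auto intro!: prod_disj TT_disj)
  qed (simp_all add: TT_fin SS_fin card_cartesian_product)
  have "card (PP xs k) = (\<Sum>i=1..<length xs. card (\<Union>k1\<in>{..k}. TT (take i xs) k1 \<times> SS (drop i xs) (k-k1)))"
    unfolding PP_def
  proof (rule card_UN_disjoint)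
    show "\<forall>a\<in>{1..<length xs}. \<forall>b\<in>{1..<length xs}. a \<noteq> b \<longrightarrow> (\<Union>k1\<in>{..k}. TT (take a xs) k1 \<times> SS (drop a xs) (k-k1)) \<inter> (\<Union>k1\<in>{..k}. TT (take b xs) k1 \<times> SS (drop b xs) (k-k1)) = {}"
    proof (intro ballI impI)
      fix a b assume a: "a \<in> {1..<length xs}" and b: "b \<in> {1..<length xs}" and ab: "a \<noteq> b"
      have "length (take a xs) = a" "length (take b xs) = b" using a b by auto
      then have "take a xs \<noteq> take b xs" using ab by metis
      then have "(TT (take a xs) k1 \<times> SS (drop a xs) (k-k1)) \<inter> (TT (take b xs) k2 \<times> SS (drop b xs) (k-k2)) = {}" for k1 k2
        by (intro prod_disj TT_disj) simp
      then show "(\<Union>k1\<in>{..k}. TT (take a xs) k1 \<times> SS (drop a xs) (k-k1)) \<inter> (\<Union>k1\<in>{..k}. TT (take b xs) k1 \<times> SS (drop b xs) (k-k1)) = {}"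
        by blast
    qed
  qed (simp_all add: TT_fin SS_fin)
  then show ?thesis using inner by simp
qed

lemma mkR_ne: "mkR p \<noteq> IdD q" by (cases p) auto

lemma card_TT: "card (TT xs k) = (if length xs = 1 \<and> k = 1 then 1 else 0) +
   (\<Sum>i=1..<length xs. \<Sum>k1\<le>k. card (TT (take i xs) k1) * card (SS (drop i xs) (k-k1)))"
proof -
  have fP: "finite (PP xs k)" using PP_fin SS_fin by blast
  have "card (TT xs k) = card (if length xs = 1 \<and> k = 1 then {IdD (hd xs)} else {}) + card (mkR ` PP xs k)"
    unfolding TT_dec[of xs k] by (rule card_Un_disjoint) (auto simp: fP mkR_ne)
  also have "card (mkR ` PP xs k) = card (PP xs k)"
    by (rule card_image) (metis inj_on_subset mkR_inj subset_UNIV)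
  finally show ?thesis using card_PP by simp
qed


fun mapf :: "(nat \<Rightarrow> nat) \<Rightarrow> form \<Rightarrow> form" where
  "mapf f (Atom p) = Atom (f p)"
| "mapf f (Prod A B) = Prod (mapf f A) (mapf f B)"

fun mapd :: "(nat \<Rightarrow> nat) \<Rightarrow> deriv \<Rightarrow> deriv" where
  "mapd f (IdD p) = IdD (f p)"
| "mapd f (LD A B D C d) = LD (mapf f A) (mapf f B) (map (mapf f) D) (mapf f C) (mapd f d)"
| "mapd f (RD G D A B d1 d2) = RD (map (mapf f) G) (map (mapf f) D) (mapf f A) (mapf f B) (mapd f d1) (mapd f d2)"

lemma concl_mapd: "concl (mapd f d) = (map (mapf f) (ctx d), mapf f (goal d))"
  by (induction d) auto

lemma fr_mapf: "fr (mapf f C) = map f (fr C)"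
  by (induction C) auto

lemma irr_map: "irreducible (map (mapf f) G) = irreducible G"
  by (cases G rule: irreducible.cases) auto

lemma focused_mapd: "focused d \<Longrightarrow> focused (mapd f d)"
  by (induction d) (auto simp: concl_mapd irr_map)

lemma mapf_inv: "(\<And>a. g (f a) = a) \<Longrightarrow> mapf g (mapf f C) = C"
  by (induction C) auto

lemma mapfs_inv: "(\<And>a. g (f a) = a) \<Longrightarrow> map (mapf g) (map (mapf f) G) = G"
  by (induction G) (auto simp: mapf_inv)

lemma mapd_inv: assumes "\<And>a. g (f a) = a" shows "mapd g (mapd f d) = d"
proof -
  have h: "mapf g (mapf f C) = C" for C by (induction C) (auto simp: assms)
  show ?thesis by (induction d) (auto simp: h comp_def assms)
qed

lemma SS_relabel:
  assumes gf: "\<And>a. g (f a) = a" and fg: "\<And>a. f (g a) = a"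
  shows "card (SS (map f xs) k) = card (SS xs k)"
proof -
  have "bij_betw (mapd f) (SS xs k) (SS (map f xs) k)"
  proof (rule bij_betw_imageI)
    show "inj_on (mapd f) (SS xs k)"
    proof (rule inj_onI)
      fix x y assume "mapd f x = mapd f y"
      then have "mapd g (mapd f x) = mapd g (mapd f y)" by simp
      then show "x = y" by (simp add: mapd_inv[of g f, OF gf])
    qed
    show "mapd f ` SS xs k = SS (map f xs) k"
    proof
      show "mapd f ` SS xs k \<subseteq> SS (map f xs) k"
        by (auto simp: SS_def focused_mapd concl_mapd fr_mapf)
      show "SS (map f xs) k \<subseteq> mapd f ` SS xs k"
      proof
        fix d assume d: "d \<in> SS (map f xs) k"
        have "mapd g d \<in> SS xs k"
          using d by (auto simp: SS_def focused_mapd concl_mapd fr_mapf gf comp_def)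
        moreover have "d = mapd f (mapd g d)" by (simp add: mapd_inv[of f g, OF fg])
        ultimately show "d \<in> mapd f ` SS xs k" by blast
      qed
    qed
  qed
  then show ?thesis by (simp add: bij_betw_same_card)
qed

lemma SS_shift: "card (SS [i..<i+N] k) = card (SS [0..<N] k)"
proof -
  define f where "f b = (if b < N then b + i else if b < N + i then b - N else b)" for b
  define g where "g a = (if a < i then a + N else if a < i + N then a - i else a)" for a
  have gf: "g (f a) = a" for a unfolding f_def g_def by auto
  have fg: "f (g a) = a" for a unfolding f_def g_def by auto
  have "map f [0..<N] = map (\<lambda>b. b + i) [0..<N]" by (rule map_cong) (auto simp: f_def)
  also have "\<dots> = [i..<i+N]" by (simp add: map_add_upt add.commute)
  finally show ?thesis using SS_relabel[OF gf fg, of "[0..<N]" k] by simp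
qed

lemma ell_SS: "ell n k = card (SS [0..<Suc n] k)"
proof -
  have "length (fr C) = Suc n \<Longrightarrow> fsize C = n" for C using fr_len[of C] by simp
  then show ?thesis unfolding ell_def SS_def by (metis length_upt diff_zero)
qed



lemma rr_TT: "rr n k = card (TT [0..<Suc n] k)"
proof -
  have "length (fr C) = Suc n \<Longrightarrow> fsize C = n" for C using fr_len[of C] by simp
  then show ?thesis unfolding rr_def TT_def by (metis length_upt diff_zero)
qed

lemma rec_R: "rr n k = (if n = 0 then (if k = 1 then 1 else 0)
   else (\<Sum>j=0..<n. \<Sum>k1\<le>k. rr j k1 * ell (n-1-j) (k-k1)))"
proof (cases "n = 0")
  case True then show ?thesis using card_TT[of "[0]" k] rr_TT[of 0 k] by simp
next
  case False
  have c: "card (TT [0..<Suc n] k) = (\<Sum>i=1..<Suc n. \<Sum>k1\<le>k. card (TT (take i [0..<Suc n]) k1) * card (SS (drop i [0..<Suc n]) (k-k1)))"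
    using card_TT[of "[0..<Suc n]" k] False by simp
  have "card (TT (take i [0..<Suc n]) k1) * card (SS (drop i [0..<Suc n]) (k - k1)) =
         rr (i - 1) k1 * ell (n - i) (k - k1)" if i: "i \<in> {1..<Suc n}" for i k1
  proof -
    have "take i [0..<Suc n] = [0..<Suc (i-1)]" using i by simp
    moreover have "drop i [0..<Suc n] = [i..<i + Suc (n-i)]" using i by simp
    ultimately show ?thesis
      using SS_shift[of i "Suc (n-i)" "k-k1"] rr_TT[of "i-1" k1] ell_SS[of "n-i" "k-k1"] by simp
  qed
  then have "rr n k = (\<Sum>i=1..<Suc n. \<Sum>k1\<le>k. rr (i-1) k1 * ell (n-i) (k-k1))"
    unfolding rr_TT[of n k] c by (intro sum.cong refl) blast
  also have "\<dots> = (\<Sum>j=0..<n. \<Sum>k1\<le>k. rr j k1 * ell (n-1-j) (k-k1))"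
    using sum.shift_bounds_nat_ivl[of "\<lambda>i. \<Sum>k1\<le>k. rr (i-1) k1 * ell (n-i) (k-k1)" 0 1 n] by simp
  finally show ?thesis using False by simp
qed

lemma ell0: "ell n 0 = 0" unfolding ell_SS SS0 by simp
lemma rr0: "rr n 0 = 0" unfolding rr_TT using TT_sub[of _ 0] SS0 by (simp add: subset_empty)

lemma rec_L: "k \<ge> 1 \<Longrightarrow> ell n k = rr n k + ell n (Suc k)"
  unfolding ell_SS rr_TT by (rule card_SS)


lemma Rnth: "Rgf $ k $ n = int (rr n k)" by (simp add: Rgf_def)
lemma Lnth: "Lgf $ k $ n = int (ell n k)" by (simp add: Lgf_def)

lemma eq2: "Rgf = zvar * Rgf * Lgf + xvar"
proof (rule fps_ext, rule fps_ext)
  fix k n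
  have a: "(zvar * Rgf * Lgf + xvar) $ k = fps_X * (Rgf * Lgf) $ k + (if k = 1 then 1 else 0)"
    by (simp add: mult.assoc fps_X_def)
  have b: "(Rgf * Lgf) $ k $ m = (\<Sum>i=0..k. \<Sum>j=0..m. int (rr j i) * int (ell (m - j) (k - i)))" for m
    by (simp add: fps_mult_nth fps_sum_nth Rnth Lnth)
  show "Rgf $ k $ n = (zvar * Rgf * Lgf + xvar) $ k $ n"
  proof (cases "n = 0")
    case True
    then show ?thesis unfolding a Rnth using rec_R[of 0 k] by simp
  next
    case False
    have "int (rr n k) = (\<Sum>j=0..<n. \<Sum>k1\<le>k. int (rr j k1) * int (ell (n-1-j) (k-k1)))"
      using rec_R[of n k] False by simp
    also have "\<dots> = (\<Sum>k1=0..k. \<Sum>j=0..n-1. int (rr j k1) * int (ell (n-1-j) (k-k1)))"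
    proof -
      have e: "{0..n-1} = {0..<n}" using False by auto
      show ?thesis unfolding e unfolding atLeast0AtMost by (rule sum.swap)
    qed
    finally show ?thesis unfolding a Rnth using False b[of "n-1"] by simp
  qed
qed

lemma Xc: "fls_nth (fps_to_fls (fps_X * fps_const (c::int fps))) (j::int) = (if j = 1 then c else 0)"
  by (simp only: fps_to_fls_nth fps_X_mult_nth fps_nth_fps_const) auto

lemma L0: "Lgf $ 0 = 0" by (rule fps_ext) (simp add: Lnth ell0)
lemma R0: "Rgf $ 0 = 0" by (rule fps_ext) (simp add: Rnth rr0)
lemma LrecF: "k \<ge> 1 \<Longrightarrow> Lgf $ k = Lgf $ Suc k + Rgf $ k"
  by (rule fps_ext) (simp only: fps_add_nth Lnth Rnth rec_L[of k] of_nat_add add.commute)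


lemma eq1: "fps_to_fls Lgf
           = fls_X_inv * (fps_to_fls Lgf - fps_to_fls (xvar * fps_const (Lgf $ 1))) + fps_to_fls Rgf"
  unfolding fls_eq_iff
proof
  fix m :: int
  consider "m < -1" | "m = -1" | "m = 0" | "m \<ge> 1" by linarith
  then show "fls_nth (fps_to_fls Lgf) m =
      fls_nth (fls_X_inv * (fps_to_fls Lgf - fps_to_fls (xvar * fps_const (Lgf $ 1))) + fps_to_fls Rgf) m"
  proof cases
    case 1 then show ?thesis by (simp add: fls_X_inv_times_conv_shift Xc)
  next
    case 2 then show ?thesis by (simp add: fls_X_inv_times_conv_shift L0 Xc)
  next
    case 3 then show ?thesis by (simp add: fls_X_inv_times_conv_shift L0 R0 Xc)
  next
    case 4
    define k where "k = nat m"
    have k: "m = int k" "k \<ge> 1" using 4 unfolding k_def by auto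
    have "nat (int k + 1) = Suc k" by simp
    then show ?thesis using k LrecF[of k] by (simp add: fls_X_inv_times_conv_shift Xc)
  qed
qed


theorem proposition3p2:
  shows "fps_to_fls Lgf
           = fls_X_inv * (fps_to_fls Lgf - fps_to_fls (xvar * fps_const (Lgf $ 1))) + fps_to_fls Rgf
         \<and> Rgf = zvar * Rgf * Lgf + xvar"
  using eq1 eq2 by blast

end
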